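(* Let $K\subset\mathbb{R}$ be compact and $f:\mathbb{R}\to\mathbb{R}_+$ a continuous nonnegative function supported in $K$ with $f'\in C^\star_K$. Let $$u_2(x)=\frac{1}{4\pi}\int_{\mathbb{R}}\log\Big(\frac{y^2+(f(x+y)-f(x))^2}{y^2+(f(x+y)+f(x))^2}\Big)dy.$$ Then there are a constant $C$ depending only on $K$ and bounded functions $U,R$ such that for all $x\in\mathbb{R}$ $$u_2(x)=f(x)U(x)=-f(x)\big(1+R(x)\big),$$ with $\|U\|_{L^\infty}\le C\big(1+\|f'\|_D^6\big)$ and $\|R\|_{L^\infty}\le C\|f'\|_D\big(1+\|f'\|_{L^\infty}^5\big)$.
   Context: $\omega_h(r)=\sup_{|x-y|\le r}|h(x)-h(y)|$; $\|h\|_D=\int_0^1\frac{\omega_h(r)}{r}dr$; $C^\star_K$ is the space of bounded continuous functions supported in $K$ with $\|h\|_D<\infty$. *)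

theory Defs
  imports "HOL-Analysis.Analysis"
begin

definition modulus_cont :: "(real \<Rightarrow> real) \<Rightarrow> real \<Rightarrow> real" where
  "modulus_cont h r = (SUP p \<in> {(x, y). \<bar>x - y\<bar> \<le> r}. \<bar>h (fst p) - h (snd p)\<bar>)"

definition dini_norm :: "(real \<Rightarrow> real) \<Rightarrow> real" where
  "dini_norm h = (LINT r:{0<..1}|lborel. modulus_cont h r / r)"

definition Cstar :: "real set \<Rightarrow> (real \<Rightarrow> real) set" where
  "Cstar K = {h. continuous_on UNIV h \<and> bounded (range h) \<and> (\<forall>x. x \<notin> K \<longrightarrow> h x = 0)
               \<and> set_integrable lborel {0<..1} (\<lambda>r. modulus_cont h r / r)}"

definition sup_norm :: "(real \<Rightarrow> real) \<Rightarrow> real" where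
  "sup_norm h = (SUP x. \<bar>h x\<bar>)"

definition u2 :: "(real \<Rightarrow> real) \<Rightarrow> real \<Rightarrow> real" where
  "u2 f x = 1 / (4 * pi) *
     (LINT y|lborel. ln ((y\<^sup>2 + (f (x + y) - f x)\<^sup>2) / (y\<^sup>2 + (f (x + y) + f x)\<^sup>2)))"

end

theory Submission
  imports Defs "HOL-Real_Asymp.Real_Asymp"
begin


lemma einterval_0_inf: "einterval 0 \<infinity> = {0::real<..}"
  by (auto simp: einterval_def zero_ereal_def)

lemma LBINT_0_inf: "(LBINT y=(0::ereal)..\<infinity>. g y) = (LBINT y:{0<..}. g y)"
  by (simp add: interval_lebesgue_integral_def einterval_0_inf)

lemma int_ln1:
  fixes c :: real assumes c: "c > 0"
  shows "set_integrable lborel {0<..} (\<lambda>y. ln (1 + c^2/y^2))"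
    and "(LBINT y:{0<..}. ln (1 + c^2/y^2)) = pi * c"
proof -
  let ?F = "\<lambda>y. y * ln (1 + c^2/y^2) + 2 * c * arctan (y / c)"
  have D: "(?F has_real_derivative ln (1 + c^2/y^2)) (at y)" if "0 < y" for y
    using that c
    apply (auto intro!: derivative_eq_intros)
    apply (simp_all add: field_simps power2_eq_square add_pos_pos eval_nat_numeral)
    apply (subgoal_tac "c*(c*(y*(y*(y*y)))) + y*(y*(y*(y*(y*y)))) > 0")
     apply (simp add: eq_divide_eq)
     apply algebra
    apply (simp add: add_pos_pos)
    done
  have lim0: "((?F \<circ> real_of_ereal) \<longlongrightarrow> 0) (at_right 0)"
    unfolding zero_ereal_def ereal_tendsto_simps using c by real_asymp
  have limi: "((?F \<circ> real_of_ereal) \<longlongrightarrow> pi * c) (at_left \<infinity>)"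
    unfolding ereal_tendsto_simps using c by real_asymp
  have pos: "1 + c^2/x^2 > 0" for x :: real
    by (simp add: add_pos_nonneg)
  have pos': "1 + c^2/x^2 \<noteq> 0" for x :: real
    using pos[of x] by linarith
  have R: "set_integrable lborel (einterval 0 \<infinity>) (\<lambda>y. ln (1 + c^2/y^2))
       \<and> (LBINT y=0..\<infinity>. ln (1 + c^2/y^2)) = pi * c - 0"
    apply (rule conjI)
    apply (rule interval_integral_FTC_nonneg(1)[OF _ _ _ _ lim0 limi])
    prefer 5
    apply (rule interval_integral_FTC_nonneg(2)[OF _ _ _ _ lim0 limi])
    using D by (auto simp: pos' zero_ereal_def intro!: continuous_intros)
  from R show "set_integrable lborel {0<..} (\<lambda>y. ln (1 + c^2/y^2))"
    "(LBINT y:{0<..}. ln (1 + c^2/y^2)) = pi * c"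
    by (simp_all add: einterval_0_inf LBINT_0_inf)
qed

lemma int_inv_sq:
  fixes c :: real assumes c: "c > 0"
  shows "set_integrable lborel {c<..} (\<lambda>y. 1/y^2)"
    and "(LBINT y:{c<..}. 1/y^2) = 1/c"
proof -
  let ?F = "\<lambda>y::real. - 1/y"
  have D: "(?F has_real_derivative 1/y^2) (at y)" if "c < y" for y
    using that c
    by (auto intro!: derivative_eq_intros simp: power2_eq_square)
  have lim0: "((?F \<circ> real_of_ereal) \<longlongrightarrow> -1/c) (at_right (ereal c))"
    unfolding ereal_tendsto_simps using c apply real_asymp by (simp add: field_simps)
  have limi: "((?F \<circ> real_of_ereal) \<longlongrightarrow> 0) (at_left \<infinity>)"
    unfolding ereal_tendsto_simps by real_asymp
  have R: "set_integrable lborel (einterval (ereal c) \<infinity>) (\<lambda>y. 1/y^2)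
       \<and> (LBINT y=ereal c..\<infinity>. 1/y^2) = 0 - (-1/c)"
    apply (rule conjI)
    apply (rule interval_integral_FTC_nonneg(1)[OF _ _ _ _ lim0 limi])
    prefer 5
    apply (rule interval_integral_FTC_nonneg(2)[OF _ _ _ _ lim0 limi])
    using D c by (auto intro!: continuous_intros)
  have e: "einterval (ereal c) \<infinity> = {c<..}" by (auto simp: einterval_def)
  from R show "set_integrable lborel {c<..} (\<lambda>y. 1/y^2)"
    "(LBINT y:{c<..}. 1/y^2) = 1/c"
    by (simp_all add: e interval_integral_to_infinity_eq)
qed

lemma even_integral:
  fixes g :: "real \<Rightarrow> real"
  assumes meas: "g \<in> borel_measurable lborel"
    and ev: "\<And>y. g (-y) = g y"
    and si: "set_integrable lborel {0<..} g"
  shows "integrable lborel g" and "integral\<^sup>L lborel g = 2 * (LBINT y:{0<..}. g y)"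
proof -
  let ?h1 = "\<lambda>y. indicator {0<..} y * g y"
  let ?h2 = "\<lambda>y. indicator {0<..} (0 + (-1) * y) * g (0 + (-1) * y)"
  have i1: "integrable lborel ?h1" using si by (simp add: set_integrable_def)
  have i2: "integrable lborel ?h2"
    using lborel_integrable_real_affine[OF i1, of "-1" 0] by simp
  have ae: "AE y in lborel. g y = ?h1 y + ?h2 y"
    using AE_lborel_singleton[of 0]
    by eventually_elim (auto simp: indicator_def ev)
  show ig: "integrable lborel g"
    using integrable_cong_AE[OF meas _ ae] i1 i2 by (simp add: Bochner_Integration.integrable_add[OF i1 i2])
  have "integral\<^sup>L lborel g = integral\<^sup>L lborel (\<lambda>y. ?h1 y + ?h2 y)"
    by (rule integral_cong_AE[OF meas _ ae]) (use i1 i2 in auto)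
  also have "\<dots> = integral\<^sup>L lborel ?h1 + integral\<^sup>L lborel ?h2"
    by (rule Bochner_Integration.integral_add[OF i1 i2])
  also have "integral\<^sup>L lborel ?h2 = integral\<^sup>L lborel ?h1"
    using lborel_integral_real_affine[of "-1" ?h1 0] by simp
  finally show "integral\<^sup>L lborel g = 2 * (LBINT y:{0<..}. g y)"
    by (simp add: set_lebesgue_integral_def)
qed

lemma lipschitz_from_deriv:
  fixes F F' :: "real \<Rightarrow> real"
  assumes d: "\<And>z. (F has_real_derivative F' z) (at z)" and b: "\<And>z. \<bar>F' z\<bar> \<le> B"
  shows "\<bar>F u - F v\<bar> \<le> B * \<bar>u - v\<bar>"
proof -
  have *: "\<bar>F b' - F a'\<bar> \<le> B * \<bar>b' - a'\<bar>" if ab: "a' < b'" for a' b'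
  proof -
    obtain z where "F b' - F a' = (b' - a') * F' z"
      using MVT2[OF ab, of F F'] d by blast
    then have "\<bar>F b' - F a'\<bar> = \<bar>b' - a'\<bar> * \<bar>F' z\<bar>" by (simp add: abs_mult)
    also have "\<dots> \<le> \<bar>b' - a'\<bar> * B" by (rule mult_left_mono[OF b]) simp
    finally show ?thesis by (simp add: mult.commute)
  qed
  consider "u < v" | "u = v" | "v < u" by linarith
  then show ?thesis
  proof cases
    case 1 then show ?thesis using *[OF 1] by (simp add: abs_minus_commute)
  next
    case 2 then show ?thesis using b[of 0] by simp
  next
    case 3 then show ?thesis using *[OF 3] by simp
  qed
qed

section \<open>Modulus of continuity\<close>

lemma mc_bdd:
  fixes h :: "real \<Rightarrow> real"
  assumes L: "\<And>z. \<bar>h z\<bar> \<le> L"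
  shows "bdd_above ((\<lambda>p. \<bar>h (fst p) - h (snd p)\<bar>) ` A)"
proof (rule bdd_aboveI[where M="2*L"])
  fix t assume "t \<in> (\<lambda>p. \<bar>h (fst p) - h (snd p)\<bar>) ` A"
  then obtain p where "t = \<bar>h (fst p) - h (snd p)\<bar>" by blast
  then show "t \<le> 2 * L" using L[of "fst p"] L[of "snd p"] by linarith
qed

lemma mc_ge:
  fixes h :: "real \<Rightarrow> real"
  assumes L: "\<And>z. \<bar>h z\<bar> \<le> L" and uv: "\<bar>u - v\<bar> \<le> r"
  shows "\<bar>h u - h v\<bar> \<le> modulus_cont h r"
  unfolding modulus_cont_def
  using cSUP_upper[OF _ mc_bdd[OF L], of "(u,v)" "{(x, y). \<bar>x - y\<bar> \<le> r}"] uv by auto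

lemma mc_le:
  fixes h :: "real \<Rightarrow> real"
  assumes L: "\<And>z. \<bar>h z\<bar> \<le> L" and r: "0 \<le> r"
  shows "modulus_cont h r \<le> 2 * L"
  unfolding modulus_cont_def
proof (rule cSUP_least)
  have "(0,0) \<in> {(x, y). \<bar>x - y\<bar> \<le> r}" using r by simp
  then show "{(x, y). \<bar>x - y\<bar> \<le> r} \<noteq> {}" by blast
  fix p show "\<bar>h (fst p) - h (snd p)\<bar> \<le> 2 * L"
    using L[of "fst p"] L[of "snd p"] by linarith
qed

lemma mc_nonneg:
  fixes h :: "real \<Rightarrow> real"
  assumes L: "\<And>z. \<bar>h z\<bar> \<le> L" and r: "0 \<le> r"
  shows "0 \<le> modulus_cont h r"
  using mc_ge[OF L, of 0 0 r] r by simp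

lemma mc_subadd:
  fixes h :: "real \<Rightarrow> real"
  assumes L: "\<And>z. \<bar>h z\<bar> \<le> L" and r1: "0 \<le> r1" and r2: "0 \<le> r2"
  shows "modulus_cont h (r1 + r2) \<le> modulus_cont h r1 + modulus_cont h r2"
  unfolding modulus_cont_def[of h "r1 + r2"]
proof (rule cSUP_least)
  have "(0,0) \<in> {(x, y). \<bar>x - y\<bar> \<le> r1 + r2}" using r1 r2 by simp
  then show "{(x, y). \<bar>x - y\<bar> \<le> r1 + r2} \<noteq> {}" by blast
  fix p assume "p \<in> {(x, y). \<bar>x - y\<bar> \<le> r1 + r2}"
  then obtain x y where p: "p = (x, y)" and xy: "\<bar>x - y\<bar> \<le> r1 + r2" by auto
  define m where "m = (if x \<le> y then min (x + r1) y else max (x - r1) y)"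
  have 1: "\<bar>x - m\<bar> \<le> r1" and 2: "\<bar>m - y\<bar> \<le> r2"
    using xy r1 r2 by (auto simp: m_def)
  have "\<bar>h x - h y\<bar> \<le> \<bar>h x - h m\<bar> + \<bar>h m - h y\<bar>" by linarith
  also have "\<dots> \<le> modulus_cont h r1 + modulus_cont h r2"
    by (rule add_mono; rule mc_ge[OF L]) (use 1 2 in auto)
  finally show "\<bar>h (fst p) - h (snd p)\<bar> \<le> modulus_cont h r1 + modulus_cont h r2" by (simp add: p)
qed

lemma mc_mono:
  fixes h :: "real \<Rightarrow> real"
  assumes L: "\<And>z. \<bar>h z\<bar> \<le> L" and r: "0 \<le> r" and rr: "r \<le> r'"
  shows "modulus_cont h r \<le> modulus_cont h r'"
  unfolding modulus_cont_def
proof (rule cSUP_subset_mono)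
  have "(0,0) \<in> {(x, y). \<bar>x - y\<bar> \<le> r}" using r by simp
  then show "{(x, y). \<bar>x - y\<bar> \<le> r} \<noteq> {}" by blast
qed (use rr in \<open>auto intro: mc_bdd[OF L]\<close>)

lemma mc_zero:
  fixes h :: "real \<Rightarrow> real"
  shows "modulus_cont h 0 \<le> 0"
  unfolding modulus_cont_def
proof (rule cSUP_least)
  have "(0,0) \<in> {(x, y). \<bar>x - y\<bar> \<le> (0::real)}" by simp
  then show "{(x, y). \<bar>x - y\<bar> \<le> (0::real)} \<noteq> {}" by blast
qed auto

lemma mc_mult:
  fixes h :: "real \<Rightarrow> real"
  assumes L: "\<And>z. \<bar>h z\<bar> \<le> L" and r: "0 \<le> r"
  shows "modulus_cont h (real n * r) \<le> real n * modulus_cont h r"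
proof (induction n)
  case 0 show ?case using mc_zero[of h] by simp
next
  case (Suc n)
  have "modulus_cont h (real (Suc n) * r) = modulus_cont h (r + real n * r)"
    by (simp add: algebra_simps)
  also have "\<dots> \<le> modulus_cont h r + modulus_cont h (real n * r)"
    by (rule mc_subadd[OF L r]) (use r in simp)
  also have "\<dots> \<le> modulus_cont h r + real n * modulus_cont h r" using Suc by simp
  finally show ?case by (simp add: algebra_simps)
qed

lemma mc_scale:
  fixes h :: "real \<Rightarrow> real"
  assumes L: "\<And>z. \<bar>h z\<bar> \<le> L" and r: "0 < r" and R: "0 \<le> R"
  shows "modulus_cont h R \<le> (R / r + 1) * modulus_cont h r"
proof -
  define n where "n = nat \<lceil>R / r\<rceil>"
  have n1: "R / r \<le> real n" unfolding n_def by linarith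
  have n2: "real n \<le> R / r + 1"
  proof -
    have "0 \<le> R / r" using R r by simp
    then have "real n = real_of_int \<lceil>R / r\<rceil>" unfolding n_def by simp
    moreover have "real_of_int \<lceil>R / r\<rceil> < R / r + 1" by linarith
    ultimately show ?thesis by simp
  qed
  have "R \<le> real n * r" using n1 r by (simp add: field_simps)
  then have "modulus_cont h R \<le> modulus_cont h (real n * r)" by (rule mc_mono[OF L R])
  also have "\<dots> \<le> real n * modulus_cont h r" by (rule mc_mult[OF L]) (use r in simp)
  also have "\<dots> \<le> (R / r + 1) * modulus_cont h r"
    by (rule mult_right_mono[OF n2 mc_nonneg[OF L]]) (use r in simp)
  finally show ?thesis .
qed

section \<open>Pointwise estimates\<close>

definition phi :: "real \<Rightarrow> real \<Rightarrow> real \<Rightarrow> real" where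
  "phi a y t = ln (y^2 + t^2) - ln (y^2 + (t + 2*a)^2)"

lemma g_lip:
  fixes y t t' :: real assumes y: "y \<noteq> 0"
  shows "\<bar>2*t/(y^2+t^2) - 2*t'/(y^2+t'^2)\<bar> \<le> 2 * \<bar>t - t'\<bar> / y^2"
proof -
  have p1: "y^2 + t^2 > 0" and p2: "y^2 + t'^2 > 0" and p3: "y^2 > 0" using y
    by (simp_all add: add_pos_nonneg)
  have eq: "2*t/(y^2+t^2) - 2*t'/(y^2+t'^2) = 2*(t-t')*(y^2 - t*t')/((y^2+t^2)*(y^2+t'^2))"
  proof -
    have "2*t/(y^2+t^2) - 2*t'/(y^2+t'^2) = (2*t*(y^2+t'^2) - 2*t'*(y^2+t^2))/((y^2+t^2)*(y^2+t'^2))"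
      by (rule diff_frac_eq) (use p1 p2 in auto)
    also have "2*t*(y^2+t'^2) - 2*t'*(y^2+t^2) = 2*(t-t')*(y^2 - t*t')"
      by (simp add: algebra_simps power2_eq_square)
    finally show ?thesis .
  qed
  have key: "\<bar>y^2 - t*t'\<bar> * y^2 \<le> (y^2+t^2)*(y^2+t'^2)"
  proof -
    have "\<bar>y^2 - t*t'\<bar> \<le> y^2 + \<bar>t*t'\<bar>" by (simp add: abs_triangle_ineq4 order.trans[OF abs_triangle_ineq4])
    moreover have "2*\<bar>t*t'\<bar> \<le> t^2 + t'^2"
    proof -
      have "0 \<le> (\<bar>t\<bar> - \<bar>t'\<bar>)^2" by simp
      also have "\<dots> = t^2 - 2*\<bar>t*t'\<bar> + t'^2"
        by (simp add: power2_eq_square algebra_simps abs_mult)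
      finally show ?thesis by linarith
    qed
    ultimately have "\<bar>y^2 - t*t'\<bar> * y^2 \<le> (y^2 + (t^2+t'^2)) * y^2"
      using p3 by (intro mult_right_mono) auto
    also have "\<dots> \<le> (y^2+t^2)*(y^2+t'^2)"
      using zero_le_square[of "t*t'"] by (simp add: algebra_simps power2_eq_square)
    finally show ?thesis .
  qed
  have "\<bar>2*t/(y^2+t^2) - 2*t'/(y^2+t'^2)\<bar> = 2*\<bar>t-t'\<bar>*\<bar>y^2 - t*t'\<bar>/((y^2+t^2)*(y^2+t'^2))"
  proof -
    have h2: "\<bar>2*t - 2*t'\<bar> = 2*\<bar>t-t'\<bar>" using abs_mult[of 2 "t-t'"] by (simp add: algebra_simps)
    show ?thesis unfolding eq using p1 p2 by (simp add: abs_mult abs_divide h2)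
  qed
  also have "\<dots> \<le> 2 * \<bar>t - t'\<bar> / y^2"
  proof -
    have k2: "\<bar>y^2 - t*t'\<bar> / ((y^2+t^2)*(y^2+t'^2)) \<le> 1 / y^2"
    proof -
      have PP: "0 < (y^2+t^2)*(y^2+t'^2)" using p1 p2 by simp
      have "\<bar>y^2 - t*t'\<bar> \<le> (y^2+t^2)*(y^2+t'^2) / y^2"
        using key p3 by (simp add: le_divide_eq)
      then show ?thesis using p3 by (simp add: pos_divide_le_eq[OF PP])
    qed
    have "2*\<bar>t-t'\<bar>*\<bar>y^2 - t*t'\<bar>/((y^2+t^2)*(y^2+t'^2))
        = (2*\<bar>t-t'\<bar>) * (\<bar>y^2 - t*t'\<bar> / ((y^2+t^2)*(y^2+t'^2)))" by simp
    also have "\<dots> \<le> (2*\<bar>t-t'\<bar>) * (1/y^2)"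
      by (rule mult_left_mono[OF k2]) simp
    finally show ?thesis by simp
  qed
  finally show ?thesis .
qed

lemma phi_lip:
  fixes a y u v :: real assumes y: "y \<noteq> 0" and a: "0 \<le> a"
  shows "\<bar>phi a y u - phi a y v\<bar> \<le> 4 * a / y^2 * \<bar>u - v\<bar>"
proof (rule lipschitz_from_deriv)
  fix z
  have p: "y^2 + t^2 > 0" for t using y by (simp add: add_pos_nonneg)
  show "(phi a y has_real_derivative (2*z/(y^2+z^2) - 2*(z+2*a)/(y^2+(z+2*a)^2))) (at z)"
    unfolding phi_def[abs_def]
    by (rule derivative_eq_intros refl | use p in simp)+
  show "\<bar>2*z/(y^2+z^2) - 2*(z+2*a)/(y^2+(z+2*a)^2)\<bar> \<le> 4 * a / y^2"
    using g_lip[OF y, of z "z+2*a"] a by simp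
qed

lemma delta_bound:
  fixes a y w :: real assumes y: "0 < y" and a: "0 < a"
  defines "Dl \<equiv> phi a y (w*y) + phi a y (-(w*y)) - 2 * phi a y 0"
  shows "0 \<le> Dl" and "y \<le> 2*a \<Longrightarrow> Dl \<le> 112 * w^2"
    and "2*a \<le> y \<Longrightarrow> Dl \<le> 56 * a^2 * w^2 * (1 + w^2) / y^2"
proof -
  define q where "q = 1 + w^2"
  define u where "u = y^2 + 4*a^2"
  define Ap where "Ap = y^2 + (w*y + 2*a)^2"
  define Am where "Am = y^2 + (-(w*y) + 2*a)^2"
  define N where "N = (q*q)*(u*u) - Ap*Am"
  have y2: "0 < y^2" using y by simp
  have q1: "1 \<le> q" unfolding q_def by simp
  have qpos: "0 < q" using q1 by simp
  have upos: "0 < u" unfolding u_def using y2 by (simp add: add_pos_nonneg)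
  have Apy: "y^2 \<le> Ap" unfolding Ap_def by simp
  have Amy: "y^2 \<le> Am" unfolding Am_def by simp
  have Appos: "0 < Ap" using Apy y2 by linarith
  have Ampos: "0 < Am" using Amy y2 by linarith
  have ApAmpos: "0 < Ap * Am" using Appos Ampos by simp
  have Nid: "N = 4*a^2*w^2*(q*u + q*y^2 + 4*a^2) + 16*a^2*w^2*y^2"
    unfolding N_def q_def u_def Ap_def Am_def power2_eq_square by algebra
  have a2s2: "0 \<le> a^2 * w^2" by simp
  have Nnn: "0 \<le> N" unfolding Nid using qpos upos y2
    by (intro add_nonneg_nonneg mult_nonneg_nonneg) auto
  have Nle: "N \<le> 28 * a^2 * w^2 * q * u"
  proof -
    have uqu: "u \<le> q*u" using mult_right_mono[OF q1, of u] upos by simp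
    have "q*y^2 \<le> q*u" using qpos unfolding u_def by simp
    moreover have "4*a^2 \<le> u" "y^2 \<le> u" unfolding u_def by simp_all
    ultimately have c1: "q*u + q*y^2 + 4*a^2 \<le> 3*(q*u)" and c2: "y^2 \<le> q*u" using uqu by linarith+
    have A: "4*a^2*w^2*(q*u + q*y^2 + 4*a^2) \<le> 4*a^2*w^2*(3*(q*u))"
      by (rule mult_left_mono[OF c1]) simp
    have B: "16*a^2*w^2*y^2 \<le> 16*a^2*w^2*(q*u)"
      by (rule mult_left_mono[OF c2]) simp
    have "N \<le> 4*a^2*w^2*(3*(q*u)) + 16*a^2*w^2*(q*u)" using A B Nid by linarith
    also have "\<dots> = 28 * a^2 * w^2 * q * u" by (simp add: algebra_simps)
    finally show ?thesis .
  qed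
  define X where "X = (q*q)*(u*u)/(Ap*Am)"
  have Xeq: "X = 1 + N / (Ap*Am)"
  proof -
    have "N / (Ap*Am) = (q*q)*(u*u)/(Ap*Am) - (Ap*Am)/(Ap*Am)" unfolding N_def by (rule diff_divide_distrib)
    then show ?thesis unfolding X_def using Appos Ampos by simp
  qed
  have X1: "1 \<le> X" unfolding Xeq using Nnn ApAmpos by simp
  have Xpos: "0 < X" using X1 by simp
  have DlX: "Dl = ln X"
  proof -
    have e1: "y^2 + (w*y)^2 = q * y^2" unfolding q_def by (simp add: algebra_simps power2_eq_square)
    have e2: "y^2 + (-(w*y))^2 = q * y^2" unfolding q_def by (simp add: algebra_simps power2_eq_square)
    have e3: "y^2 + (0 + 2*a)^2 = u" unfolding u_def by (simp add: power2_eq_square)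
    have "Dl = (ln (q*y^2) - ln Ap) + (ln (q*y^2) - ln Am) - 2 * (ln (y^2) - ln u)"
      unfolding Dl_def phi_def e1 e2 e3 Ap_def[symmetric] Am_def[symmetric] by simp
    also have "\<dots> = 2 * ln q + 2 * ln u - ln Ap - ln Am"
      using qpos y2 by (simp add: ln_mult)
    also have "\<dots> = ln X"
      unfolding X_def using qpos upos Appos Ampos
      by (simp add: ln_div ln_mult mult_pos_pos)
    finally show ?thesis .
  qed
  have lnX: "Dl \<le> N / (Ap*Am)" unfolding DlX
    using ln_le_minus_one[OF Xpos] Xeq by simp
  show "0 \<le> Dl" unfolding DlX using X1 by simp
  show "Dl \<le> 56 * a^2 * w^2 * (1 + w^2) / y^2" if ya: "2*a \<le> y"
  proof -
    have u2y: "u \<le> 2*y^2"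
    proof -
      have "(2*a)^2 \<le> y^2" using ya a by (intro power_mono) auto
      then show ?thesis unfolding u_def by (simp add: power2_eq_square)
    qed
    have y4: "y^2*y^2 \<le> Ap*Am" using Apy Amy y2 Appos by (intro mult_mono) auto
    have "N / (Ap*Am) \<le> N / (y^2*y^2)"
      using Nnn y4 y2 ApAmpos by (intro divide_left_mono) (auto intro: mult_pos_pos)
    also have "\<dots> \<le> (28 * a^2 * w^2 * q * (2*y^2)) / (y^2*y^2)"
    proof (rule divide_right_mono)
      have "28 * a^2 * w^2 * q * u \<le> 28 * a^2 * w^2 * q * (2*y^2)"
        using u2y qpos a2s2 by (intro mult_left_mono) auto
      then show "N \<le> 28 * a^2 * w^2 * q * (2*y^2)" using Nle by linarith
    qed simp
    also have "\<dots> = (56 * a^2 * w^2 * q) * y^2 / (y^2 * y^2)" by (simp add: algebra_simps)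
    also have "\<dots> = (56 * a^2 * w^2 * q) / y^2"
      using y2 mult_divide_mult_cancel_right[of "y^2" "56 * a^2 * w^2 * q" "y^2"] by simp
    also have "\<dots> = 56 * a^2 * w^2 * (1 + w^2) / y^2" unfolding q_def ..
    finally show ?thesis using lnX by linarith
  qed
  show "Dl \<le> 112 * w^2" if ya: "y \<le> 2*a"
  proof -
    have u8: "u \<le> 8*a^2"
    proof -
      have "y^2 \<le> (2*a)^2" using ya y by (intro power_mono) auto
      then show ?thesis unfolding u_def by (simp add: power2_eq_square)
    qed
    have qAp: "4*a^2 \<le> q*Ap"
    proof -
      have "q*Ap = (q*y + 2*a*w)^2 + 4*a^2" unfolding q_def Ap_def by (simp add: algebra_simps power2_eq_square)
      then show ?thesis by simp
    qed
    have qAm: "4*a^2 \<le> q*Am"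
    proof -
      have "q*Am = (q*y - 2*a*w)^2 + 4*a^2" unfolding q_def Am_def by (simp add: algebra_simps power2_eq_square)
      then show ?thesis by simp
    qed
    have a4: "0 < 16*a^2*a^2" using a by simp
    have big: "16*a^2*a^2 \<le> (q*q)*(Ap*Am)"
    proof -
      have "(4*a^2)*(4*a^2) \<le> (q*Ap)*(q*Am)"
        by (rule mult_mono) (use qAp qAm qpos Appos in auto)
      then show ?thesis by (simp add: algebra_simps)
    qed
    define P where "P = (q*q)*(Ap*Am)"
    define A4 where "A4 = 16*a^2*a^2"
    have Ppos: "0 < P" unfolding P_def using qpos ApAmpos by simp
    have A4pos: "0 < A4" unfolding A4_def using a by simp
    have A4P: "A4 \<le> P" unfolding A4_def P_def using big .
    have qq: "0 \<le> q*q" using qpos by simp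
    have uu8: "u*u \<le> (8*a^2)*(8*a^2)" by (rule mult_mono) (use u8 upos in auto)
    show ?thesis
    proof (cases "w^2 \<le> 1")
      case True
      have q2: "q \<le> 2" unfolding q_def using True by simp
      have "N / (Ap*Am) = (q*q)*N / P" unfolding P_def using qpos by simp
      also have "\<dots> \<le> (q*q)*N / A4"
        by (rule divide_left_mono[OF A4P]) (use qq Nnn Ppos A4pos in auto)
      also have "\<dots> \<le> (q*q)*(28 * a^2 * w^2 * q * u) / A4"
        by (rule divide_right_mono[OF mult_left_mono[OF Nle qq]]) (use A4pos in simp)
      also have "\<dots> \<le> (2*2)*(28 * a^2 * w^2 * 2 * (8*a^2)) / A4"
      proof (rule divide_right_mono)
        have c1: "q*q \<le> 2*2" by (rule mult_mono) (use q2 qpos in auto)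
        have c2: "28 * a^2 * w^2 * q * u \<le> 28 * a^2 * w^2 * 2 * (8*a^2)"
        proof -
          have "q * u \<le> 2 * (8*a^2)" by (rule mult_mono) (use q2 u8 qpos upos in auto)
          then have "(28 * a^2 * w^2) * (q * u) \<le> (28 * a^2 * w^2) * (2 * (8*a^2))"
            by (rule mult_left_mono) simp
          then show ?thesis by (simp add: mult.assoc)
        qed
        show "(q*q)*(28 * a^2 * w^2 * q * u) \<le> (2*2)*(28 * a^2 * w^2 * 2 * (8*a^2))"
          by (rule mult_mono[OF c1 c2]) (use qpos upos in auto)
      qed (use A4pos in simp)
      also have "\<dots> = 112 * w^2" unfolding A4_def using a by (simp add: field_simps power2_eq_square)
      finally show ?thesis using lnX by linarith
    next
      case False
      have "X = (q*q)*((q*q)*(u*u)) / P" unfolding X_def P_def using qpos by simp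
      also have "\<dots> \<le> (q*q)*((q*q)*(u*u)) / A4"
        by (rule divide_left_mono[OF A4P]) (use qq Ppos A4pos in auto)
      also have "\<dots> \<le> (q*q)*((q*q)*((8*a^2)*(8*a^2))) / A4"
        by (rule divide_right_mono[OF mult_left_mono[OF mult_left_mono[OF uu8 qq] qq]]) (use A4pos in simp)
      also have "\<dots> = 4 * (q*q*q*q)" unfolding A4_def using a by (simp add: field_simps power2_eq_square)
      finally have Xle: "X \<le> 4 * (q*q*q*q)" .
      have "ln X \<le> ln (4 * (q*q*q*q))" using Xle Xpos by simp
      also have "\<dots> = ln 4 + 4 * ln q" using qpos by (simp add: ln_mult)
      also have "\<dots> \<le> 3 + 4 * w^2"
        using ln_le_minus_one[of 4] ln_le_minus_one[OF qpos] unfolding q_def by simp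
      also have "\<dots> \<le> 112 * w^2" using False by simp
      finally show ?thesis unfolding DlX .
    qed
  qed
qed

lemma e_bound_plus:
  fixes f f' :: "real \<Rightarrow> real"
  assumes fder: "\<And>z. (f has_real_derivative f' z) (at z)" and L: "\<And>z. \<bar>f' z\<bar> \<le> L" and y: "0 < y"
  shows "\<bar>f (x+y) - f x - f' x * y\<bar> \<le> y * modulus_cont f' y"
proof -
  have xy: "x < x + y" using y by simp
  obtain z where z: "x < z" "z < x + y" and eq: "f (x+y) - f x = (x + y - x) * f' z"
    using MVT2[OF xy, of f f'] fder by blast
  have "\<bar>f' z - f' x\<bar> \<le> modulus_cont f' y" by (rule mc_ge[OF L]) (use z in auto)
  moreover have "f (x+y) - f x - f' x * y = y * (f' z - f' x)" using eq by (simp add: algebra_simps)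
  ultimately show ?thesis using y by (simp add: abs_mult)
qed

lemma e_bound_minus:
  fixes f f' :: "real \<Rightarrow> real"
  assumes fder: "\<And>z. (f has_real_derivative f' z) (at z)" and L: "\<And>z. \<bar>f' z\<bar> \<le> L" and y: "0 < y"
  shows "\<bar>f (x-y) - f x + f' x * y\<bar> \<le> y * modulus_cont f' y"
proof -
  have xy: "x - y < x" using y by simp
  obtain z where z: "x - y < z" "z < x" and eq: "f x - f (x-y) = (x - (x - y)) * f' z"
    using MVT2[OF xy, of f f'] fder by blast
  have "\<bar>f' x - f' z\<bar> \<le> modulus_cont f' y" by (rule mc_ge[OF L]) (use z in auto)
  moreover have "f (x-y) - f x + f' x * y = y * (f' x - f' z)" using eq by (simp add: algebra_simps)
  ultimately show ?thesis using y by (simp add: abs_mult)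
qed

lemma ln_abs_bound:
  fixes t v W :: real assumes t: "0 < t" and tv: "t \<le> v" and vW: "v \<le> W"
  shows "\<bar>ln v\<bar> \<le> ln (1 + 1/t) + ln (1 + W)"
proof -
  have v: "0 < v" using t tv by simp
  have W: "0 < W" using v vW by simp
  have l1: "0 \<le> ln (1 + 1/t)" using t by simp
  have l2: "0 \<le> ln (1 + W)" using W by simp
  show ?thesis
  proof (cases "1 \<le> v")
    case True
    have "ln v \<le> ln (1 + W)" using v vW by simp
    then show ?thesis using True l1 by simp
  next
    case False
    have "\<bar>ln v\<bar> = - ln v" using False v by simp
    also have "\<dots> = ln (1/v)" using v by (simp add: ln_div)
    also have "\<dots> \<le> ln (1/t)" using t tv by (simp add: divide_simps)
    also have "\<dots> \<le> ln (1 + 1/t)" using t by (subst ln_le_cancel_iff) (auto intro: add_pos_pos)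
    finally show ?thesis using l2 by simp
  qed
qed

lemma main_estimate:
  fixes f f' :: "real \<Rightarrow> real" and x Y L M :: real
  assumes fcont: "continuous_on UNIV f"
    and fder: "\<And>z. (f has_real_derivative f' z) (at z)"
    and L: "\<And>z. \<bar>f' z\<bar> \<le> L"
    and M: "\<And>z. \<bar>f z\<bar> \<le> M"
    and apos: "0 < f x"
    and Y: "1 \<le> Y"
    and supp: "\<And>z. Y < \<bar>z - x\<bar> \<Longrightarrow> f z = 0"
    and dini: "set_integrable lborel {0<..1} (\<lambda>r. modulus_cont f' r / r)"
  shows "4 * pi * \<bar>u2 f x + f x\<bar> \<le> 8 * f x * (LBINT r:{0<..1}. modulus_cont f' r / r)
      + 16 * f x * L * Y + 224 * f x * (f' x)^2 + 28 * f x * (f' x)^2 * (1 + (f' x)^2)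
      + 8 * (f x)^2 / Y"
proof -
  define a where "a = f x"
  define s where "s = f' x"
  define D where "D = (LBINT r:{0<..1}. modulus_cont f' r / r)"
  define I where "I = (\<lambda>y. ln ((y\<^sup>2 + (f (x + y) - f x)\<^sup>2) / (y\<^sup>2 + (f (x + y) + f x)\<^sup>2)))"
  define I0 where "I0 = (\<lambda>y::real. - ln (1 + (2*a)^2/y^2))"
  have a: "0 < a" using apos a_def by simp
  have [measurable]: "f \<in> borel_measurable borel" by (rule borel_measurable_continuous_onI[OF fcont])
  have u2eq: "u2 f x = 1/(4*pi) * integral\<^sup>L lborel I" unfolding u2_def I_def by simp
  have Imeas: "I \<in> borel_measurable lborel" unfolding I_def by measurable
  have Iint: "integrable lborel I"
  proof -
    have s1: "set_integrable lborel {0<..} (\<lambda>y::real. ln (1 + 1/y^2))"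
      using int_ln1(1)[of 1] by simp
    have lnint: "integrable lborel (\<lambda>y::real. ln (1 + 1/y^2))"
      by (rule even_integral(1)[OF _ _ s1]) auto
    define W where "W = 1 + Y^2 + (M + a)^2"
    define G where "G = (\<lambda>y. 2 * ln (1 + 1/y^2) + 2 * ln (1 + W) * indicator {-Y..Y} y)"
    have Gint: "integrable lborel G"
    proof -
      have "integrable lborel (indicator {-Y..Y} :: real \<Rightarrow> real)"
        by (rule integrable_real_indicator) (auto simp: emeasure_lborel_Icc_eq)
      then show ?thesis
        unfolding G_def using lnint by (intro Bochner_Integration.integrable_add integrable_mult_right) auto
    qed
    have W0: "0 \<le> W" unfolding W_def by (simp add: add_nonneg_nonneg)
    have bound: "\<bar>I y\<bar> \<le> G y" for y
    proof -
      have g0: "0 \<le> ln (1 + 1/y^2)" by simp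
      have g1: "0 \<le> 2 * ln (1 + W) * indicator {-Y..Y} y" using W0 by simp
      consider "y = 0" | "Y < \<bar>y\<bar>" | "y \<noteq> 0" "\<bar>y\<bar> \<le> Y" by linarith
      then show ?thesis
      proof cases
        case 1 then show ?thesis unfolding I_def G_def using g1 by simp
      next
        case 2
        have "f (x + y) = 0" by (rule supp) (use 2 in simp)
        then have "I y = 0" unfolding I_def by simp
        then show ?thesis unfolding G_def using g0 g1 by simp
      next
        case 3
        have y2: "0 < y^2" using 3 by simp
        have ind: "indicator {-Y..Y} y = (1::real)" using 3 by (simp add: indicator_def abs_le_iff)
        have fb: "\<bar>f (x+y)\<bar> \<le> M" "\<bar>f x\<bar> \<le> M" using M by auto
        have sq1: "(f (x + y) - f x)^2 \<le> (M + a)^2"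
          unfolding abs_le_square_iff[symmetric] using fb a_def a by linarith
        have sq2: "(f (x + y) + f x)^2 \<le> (M + a)^2"
          unfolding abs_le_square_iff[symmetric] using fb a_def a by linarith
        have yY: "y^2 \<le> Y^2" using 3 by (simp add: abs_le_square_iff[symmetric])
        define v1 where "v1 = y\<^sup>2 + (f (x + y) - f x)\<^sup>2"
        define v2 where "v2 = y\<^sup>2 + (f (x + y) + f x)\<^sup>2"
        have v1a: "y^2 \<le> v1" "v1 \<le> W" unfolding v1_def W_def using sq1 yY by auto
        have v2a: "y^2 \<le> v2" "v2 \<le> W" unfolding v2_def W_def using sq2 yY by auto
        have "I y = ln v1 - ln v2"
        proof -
          have "0 < v1" "0 < v2" using v1a v2a y2 by linarith+
          then show ?thesis unfolding I_def v1_def[symmetric] v2_def[symmetric] by (simp add: ln_div)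
        qed
        then have "\<bar>I y\<bar> \<le> \<bar>ln v1\<bar> + \<bar>ln v2\<bar>" by simp
        also have "\<dots> \<le> (ln (1 + 1/y^2) + ln (1 + W)) + (ln (1 + 1/y^2) + ln (1 + W))"
          by (intro add_mono ln_abs_bound[OF y2]) (use v1a v2a in auto)
        also have "\<dots> = G y" unfolding G_def ind by simp
        finally show ?thesis .
      qed
    qed
    show ?thesis
      by (rule Bochner_Integration.integrable_bound[OF Gint Imeas])
         (use bound in \<open>auto intro!: AE_I2 order.trans[OF _ abs_ge_self]\<close>)
  qed
  have Imint: "integrable lborel (\<lambda>y. I (-y))"
    using lborel_integrable_real_affine[OF Iint, of "-1" 0] by simp
  have Imeq: "integral\<^sup>L lborel (\<lambda>y. I (-y)) = integral\<^sup>L lborel I"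
    using lborel_integral_real_affine[of "-1" I 0] by simp
  have I0meas: "I0 \<in> borel_measurable lborel" unfolding I0_def by measurable
  have I0set: "set_integrable lborel {0<..} I0" "(LBINT y:{0<..}. I0 y) = - (pi * (2*a))"
  proof -
    have a2: "0 < 2*a" using a by simp
    note r = int_ln1[OF a2]
    show "set_integrable lborel {0<..} I0" unfolding I0_def
      using r(1) unfolding set_integrable_def by (simp add: integrable_minus)
    show "(LBINT y:{0<..}. I0 y) = - (pi * (2*a))" unfolding I0_def
      using r(2) unfolding set_lebesgue_integral_def by simp
  qed
  have I0ev: "I0 (-y) = I0 y" for y unfolding I0_def by simp
  have I0int: "integrable lborel I0" and I0eq: "integral\<^sup>L lborel I0 = 2 * (- (pi * (2*a)))"
    using even_integral[OF I0meas I0ev I0set(1)] I0set(2) by auto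
  define Q where "Q = (\<lambda>y. I y + I (-y) - 2 * I0 y)"
  have Qint: "integrable lborel Q" unfolding Q_def using Iint Imint I0int by auto
  have Qmeas: "Q \<in> borel_measurable lborel" using Qint by (rule borel_measurable_integrable)
  have Qev: "Q (-y) = Q y" for y unfolding Q_def using I0ev[of y] by simp
  have Qset: "set_integrable lborel {0<..} Q"
    unfolding set_integrable_def by (rule integrable_mult_indicator) (use Qint in auto)
  have "integral\<^sup>L lborel Q = integral\<^sup>L lborel I + integral\<^sup>L lborel (\<lambda>y. I (-y)) - 2 * integral\<^sup>L lborel I0"
    unfolding Q_def using Iint Imint I0int by simp
  also have "\<dots> = 8 * pi * u2 f x + 8 * pi * a" using Imeq I0eq u2eq by simp
  finally have Qeq1: "integral\<^sup>L lborel Q = 8 * pi * u2 f x + 8 * pi * a" .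
  have Qeq: "(LBINT y:{0<..}. Q y) = 4 * pi * (u2 f x + a)"
    using even_integral(2)[OF Qmeas Qev Qset] Qeq1 by (simp add: algebra_simps)
  have L0: "0 \<le> L" using L[of 0] by simp
  have wnn: "0 \<le> modulus_cont f' y" if "0 \<le> y" for y using mc_nonneg[OF L that] .
  define q where "q = 1 + s^2"
  define E where "E = (\<lambda>y::real. 8*a * (indicator {0<..1} y * (modulus_cont f' y / y))
      + 16*a*L * indicator {1<..Y} y + 112 * s^2 * indicator {0<..2*a} y
      + 56*a^2 * s^2*q * (indicator {2*a<..} y * (1/y^2)) + 8*a^2 * (indicator {Y<..} y * (1/y^2)))"
  have ptw: "\<bar>Q y\<bar> \<le> E y" if y: "0 < y" for y
  proof -
    have y2: "0 < y^2" using y by simp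
    have pp: "0 < y^2 + t^2" for t using y2 by (simp add: add_pos_nonneg)
    have Iphi: "I y = phi a y (f (x+y) - a)"
      unfolding I_def phi_def a_def using pp y by (simp add: ln_div algebra_simps)
    have Imphi: "I (-y) = phi a y (f (x-y) - a)"
      unfolding I_def phi_def a_def using pp y by (simp add: ln_div algebra_simps)
    have I0phi: "I0 y = phi a y 0"
    proof -
      have "1 + (2*a)^2/y^2 = (y^2 + (0 + 2*a)^2) / y^2" using y2 by (simp add: field_simps)
      moreover have "0 < y^2 + (0 + 2*a)^2" by (rule pp)
      ultimately show ?thesis unfolding I0_def phi_def using y2 by (simp add: ln_div)
    qed
    have Ei: "0 \<le> 8*a * (indicator {0<..1} y * (modulus_cont f' y / y))"
      using a wnn[of y] y by simp
    have Eii: "0 \<le> 16*a*L * indicator {1<..Y} y" using a L0 by simp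
    have Eiii: "0 \<le> 112 * s^2 * indicator {0<..2*a} y" by simp
    have Eiv: "0 \<le> 56*a^2 * s^2*q * (indicator {2*a<..} y * (1/y^2))" using a unfolding q_def by simp
    have Ev: "0 \<le> 8*a^2 * (indicator {Y<..} y * (1/y^2))" by simp
    show ?thesis
    proof (cases "Y < y")
      case True
      have "f (x+y) = 0" "f (x-y) = 0" by (rule supp, use True in simp)+
      then have "I y = 0" "I (-y) = 0" unfolding Iphi Imphi phi_def by simp_all
      then have "\<bar>Q y\<bar> = 2 * ln (1 + (2*a)^2/y^2)" unfolding Q_def I0_def
        using pp by simp
      also have "\<dots> \<le> 2 * ((2*a)^2/y^2)"
        using ln_le_minus_one[of "1 + (2*a)^2/y^2"] pp[of "2*a"] y2 by (simp add: add_pos_nonneg)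
      also have "\<dots> = 8*a^2 * (indicator {Y<..} y * (1/y^2))" using True by (simp add: power2_eq_square)
      finally show ?thesis unfolding E_def using Ei Eii Eiii Eiv by linarith
    next
      case False
      define Dl where "Dl = phi a y (s*y) + phi a y (-(s*y)) - 2 * phi a y 0"
      have Dlb: "0 \<le> Dl" "y \<le> 2*a \<Longrightarrow> Dl \<le> 112 * s^2"
        "2*a \<le> y \<Longrightarrow> Dl \<le> 56 * a^2 * s^2 * (1 + s^2) / y^2"
        using delta_bound[OF y a, of s] unfolding Dl_def by auto
      have Qd: "Q y = (phi a y (f (x+y) - a) - phi a y (s*y)) + (phi a y (f (x-y) - a) - phi a y (-(s*y))) + Dl"
        unfolding Q_def Dl_def Iphi Imphi I0phi by simp
      have p1: "\<bar>phi a y (f (x+y) - a) - phi a y (s*y)\<bar> \<le> 4*a/y^2 * (y * modulus_cont f' y)"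
      proof -
        have "\<bar>phi a y (f (x+y) - a) - phi a y (s*y)\<bar> \<le> 4*a/y^2 * \<bar>f (x+y) - a - s*y\<bar>"
          by (rule phi_lip) (use y a in auto)
        also have "\<dots> \<le> 4*a/y^2 * (y * modulus_cont f' y)"
          by (rule mult_left_mono) (use e_bound_plus[OF fder L y, of x] a y2 in \<open>auto simp: a_def s_def\<close>)
        finally show ?thesis .
      qed
      have p2: "\<bar>phi a y (f (x-y) - a) - phi a y (-(s*y))\<bar> \<le> 4*a/y^2 * (y * modulus_cont f' y)"
      proof -
        have "\<bar>phi a y (f (x-y) - a) - phi a y (-(s*y))\<bar> \<le> 4*a/y^2 * \<bar>f (x-y) - a - -(s*y)\<bar>"
          by (rule phi_lip) (use y a in auto)
        also have "\<dots> \<le> 4*a/y^2 * (y * modulus_cont f' y)"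
          by (rule mult_left_mono) (use e_bound_minus[OF fder L y, of x] a y2 in \<open>auto simp: a_def s_def\<close>)
        finally show ?thesis .
      qed
      have eq48: "4*a/y^2 * (y * modulus_cont f' y) = 4*a*(modulus_cont f' y / y)"
        using y by (simp add: field_simps power2_eq_square)
      have Q1: "\<bar>Q y\<bar> \<le> 8*a*(modulus_cont f' y / y) + Dl"
        using p1 p2 Dlb(1) unfolding Qd eq48 by linarith
      have T1: "8*a*(modulus_cont f' y / y) \<le> 8*a * (indicator {0<..1} y * (modulus_cont f' y / y))
          + 16*a*L * indicator {1<..Y} y"
      proof (cases "y \<le> 1")
        case True then show ?thesis using y Eii by (simp add: indicator_def)
      next
        case c: False
        have "modulus_cont f' y * 1 \<le> modulus_cont f' y * y"
          by (rule mult_left_mono) (use c wnn[of y] y in auto)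
        then have "modulus_cont f' y / y \<le> modulus_cont f' y" using y
          by (simp add: divide_le_eq)
        also have "\<dots> \<le> 2 * L" by (rule mc_le[OF L]) (use y in simp)
        finally have "8*a*(modulus_cont f' y / y) \<le> 8*a*(2*L)"
          by (rule mult_left_mono) (use a in simp)
        then show ?thesis using c False y by (simp add: indicator_def)
      qed
      have T2: "Dl \<le> 112 * s^2 * indicator {0<..2*a} y + 56*a^2 * s^2*q * (indicator {2*a<..} y * (1/y^2))"
      proof (cases "y \<le> 2*a")
        case True then show ?thesis using y Dlb(2) by (simp add: indicator_def)
      next
        case c: False
        then show ?thesis using y Dlb(3) unfolding q_def by (simp add: indicator_def)
      qed
      show ?thesis unfolding E_def using Q1 T1 T2 Ev by linarith
    qed
  qed
  have a2: "0 < 2*a" using a by simp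
  have Y0: "0 < Y" using Y by simp
  have i1: "integrable lborel (\<lambda>y. indicator {0<..1} y * (modulus_cont f' y / y))"
    using dini unfolding set_integrable_def by simp
  have i1v: "integral\<^sup>L lborel (\<lambda>y. indicator {0<..1} y * (modulus_cont f' y / y)) = D"
    unfolding D_def set_lebesgue_integral_def by simp
  have i2: "integrable lborel (indicator {1<..Y} :: real \<Rightarrow> real)"
    by (rule integrable_real_indicator) (use Y in auto)
  have i2v: "integral\<^sup>L lborel (indicator {1<..Y} :: real \<Rightarrow> real) = Y - 1"
    using Y by simp
  have i3: "integrable lborel (indicator {0<..2*a} :: real \<Rightarrow> real)"
    by (rule integrable_real_indicator) (use a in auto)
  have i3v: "integral\<^sup>L lborel (indicator {0<..2*a} :: real \<Rightarrow> real) = 2*a"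
    using a by simp
  have i4: "integrable lborel (\<lambda>y. indicator {2*a<..} y * (1/y^2))"
    using int_inv_sq(1)[OF a2] unfolding set_integrable_def by simp
  have i4v: "integral\<^sup>L lborel (\<lambda>y. indicator {2*a<..} y * (1/y^2)) = 1/(2*a)"
    using int_inv_sq(2)[OF a2] unfolding set_lebesgue_integral_def by simp
  have i5: "integrable lborel (\<lambda>y. indicator {Y<..} y * (1/y^2))"
    using int_inv_sq(1)[OF Y0] unfolding set_integrable_def by simp
  have i5v: "integral\<^sup>L lborel (\<lambda>y. indicator {Y<..} y * (1/y^2)) = 1/Y"
    using int_inv_sq(2)[OF Y0] unfolding set_lebesgue_integral_def by simp
  have hE: "has_bochner_integral lborel E
      (8*a*D + 16*a*L*(Y-1) + 112 * s^2*(2*a) + 56*a^2 * s^2*q*(1/(2*a)) + 8*a^2*(1/Y))"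
    unfolding E_def
    by (intro has_bochner_integral_add has_bochner_integral_mult_right)
       (use i1 i2 i3 i4 i5 i1v i2v i3v i4v i5v in \<open>simp_all add: has_bochner_integral_iff\<close>)
  have Eint: "integrable lborel E" using hE by (simp add: has_bochner_integral_iff)
  have Eval: "integral\<^sup>L lborel E = 8*a*D + 16*a*L*(Y-1) + 112 * s^2*(2*a) + 56*a^2 * s^2*q*(1/(2*a)) + 8*a^2*(1/Y)"
    using hE by (rule has_bochner_integral_integral_eq)
  have EA: "indicator {0<..} y * E y = E y" for y
  proof (cases "0 < y")
    case False
    then have "E y = 0" unfolding E_def using a2 Y0 by (simp add: indicator_def)
    then show ?thesis by simp
  qed simp
  have EA': "(\<lambda>y. indicator {0<..} y *\<^sub>R E y) = E" using EA by (simp add: fun_eq_iff)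
  have Eset: "set_integrable lborel {0<..} E" unfolding set_integrable_def EA' by (rule Eint)
  have EsetV: "(LBINT y:{0<..}. E y) = integral\<^sup>L lborel E" unfolding set_lebesgue_integral_def EA' ..
  have "4 * pi * \<bar>u2 f x + a\<bar> = \<bar>LBINT y:{0<..}. Q y\<bar>" unfolding Qeq by (simp add: abs_mult)
  also have "\<dots> \<le> (LBINT y:{0<..}. \<bar>Q y\<bar>)" using set_integral_norm_bound[OF Qset] by simp
  also have "\<dots> \<le> (LBINT y:{0<..}. E y)"
    by (rule set_integral_mono[OF set_integrable_abs[OF Qset] Eset]) (use ptw in auto)
  also have "\<dots> = 8*a*D + 16*a*L*(Y-1) + 112 * s^2*(2*a) + 56*a^2 * s^2*q*(1/(2*a)) + 8*a^2*(1/Y)"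
    using EsetV Eval by simp
  also have "\<dots> \<le> 8*a*D + 16*a*L*Y + 224*a * s^2 + 28*a * s^2*(1+s^2) + 8*a^2/Y"
  proof -
    have "16*a*L*(Y-1) \<le> 16*a*L*Y" using a L0 by (simp add: algebra_simps)
    moreover have "56*a^2 * s^2*q*(1/(2*a)) = 28*a * s^2*(1+s^2)" unfolding q_def using a
      by (simp add: field_simps power2_eq_square)
    ultimately show ?thesis by simp
  qed
  finally show ?thesis unfolding a_def s_def D_def by simp
qed

lemma L_le_D:
  fixes h :: "real \<Rightarrow> real"
  assumes L: "\<And>z. \<bar>h z\<bar> \<le> L" and Yp: "0 \<le> Y"
    and near: "\<exists>z'. \<bar>z - z'\<bar> \<le> Y \<and> h z' = 0"
    and dini: "set_integrable lborel {0<..1} (\<lambda>r. modulus_cont h r / r)"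
  shows "\<bar>h z\<bar> \<le> (Y+1) * (LBINT r:{0<..1}. modulus_cont h r / r)"
proof -
  obtain z' where z': "\<bar>z - z'\<bar> \<le> Y" "h z' = 0" using near by blast
  have hz: "\<bar>h z\<bar> \<le> modulus_cont h Y" using mc_ge[where h=h, OF L z'(1)] z'(2) by simp
  have pw: "modulus_cont h Y / (Y+1) \<le> modulus_cont h r / r" if r: "r \<in> {0<..1}" for r
  proof -
    have r0: "0 < r" and r1: "r \<le> 1" using r by auto
    have "modulus_cont h Y \<le> (Y/r + 1) * modulus_cont h r" by (rule mc_scale[OF L r0 Yp])
    also have "\<dots> \<le> ((Y+1)/r) * modulus_cont h r"
    proof (rule mult_right_mono)
      have "1 \<le> 1/r" using r0 r1 by simp
      then show "Y/r + 1 \<le> (Y+1)/r" by (simp add: add_divide_distrib)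
    qed (rule mc_nonneg[OF L], use r0 in simp)
    finally have "modulus_cont h Y \<le> ((Y+1)/r) * modulus_cont h r" .
    then show ?thesis using r0 Yp by (simp add: divide_le_eq field_simps)
  qed
  have ci: "set_integrable lborel {0<..1} (\<lambda>r::real. modulus_cont h Y / (Y+1))"
    unfolding set_integrable_def by (intro integrable_scaleR_left integrable_real_indicator) auto
  have "(LBINT (r::real):{0<..1}. modulus_cont h Y / (Y+1)) \<le> (LBINT r:{0<..1}. modulus_cont h r / r)"
    by (rule set_integral_mono[OF ci dini pw])
  moreover have "(LBINT (r::real):{0<..1}. modulus_cont h Y / (Y+1)) = modulus_cont h Y / (Y+1)"
    by (subst set_integral_const) auto
  ultimately have "modulus_cont h Y / (Y+1) \<le> (LBINT r:{0<..1}. modulus_cont h r / r)" using Yp by simp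
  then have "modulus_cont h Y \<le> (Y+1) * (LBINT r:{0<..1}. modulus_cont h r / r)"
    using Yp by (simp add: divide_le_eq mult.commute)
  then show ?thesis using hz by linarith
qed

lemma pow_le_aux:
  fixes L :: real assumes "0 \<le> L"
  shows "L \<le> 1 + L^5" and "L^3 \<le> 1 + L^5"
proof -
  show "L \<le> 1 + L^5"
  proof (cases "L \<le> 1")
    case True then show ?thesis using assms by (simp add: add_increasing2)
  next
    case False
    then have "L^1 \<le> L^5" by (intro power_increasing) auto
    then show ?thesis by simp
  qed
  show "L^3 \<le> 1 + L^5"
  proof (cases "L \<le> 1")
    case True
    then have "L^3 \<le> 1" using assms by (simp add: power_le_one)
    then show ?thesis using assms by (simp add: add_increasing2)
  next
    case False
    then have "L^3 \<le> L^5" by (intro power_increasing) auto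
    then show ?thesis by simp
  qed
qed

lemma final_arith:
  fixes D L s a Y c :: real
  assumes D: "0 \<le> D" and L0: "0 \<le> L" and LD: "L \<le> c * D" and c: "0 \<le> c"
    and sL: "\<bar>s\<bar> \<le> L" and a: "0 \<le> a" and aL: "a \<le> L * Y" and Y: "0 < Y"
  shows "8*D + 16*L*Y + 224 * s^2 + 28 * s^2*(1 + s^2) + 8*a/Y
         \<le> (8 + 16*Y*c + 288*c) * D * (1 + L^5)"
proof -
  have P: "1 \<le> 1 + L^5" using L0 by simp
  have cD: "0 \<le> c*D" using c D by simp
  have grow: "x \<le> x*(1+L^5)" if "0 \<le> x" for x using mult_left_mono[OF P that] by simp
  have s2: "s^2 \<le> L^2" using sL by (simp add: abs_le_square_iff[symmetric] abs_of_nonneg L0)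
  have s4: "s^2 * s^2 \<le> L^2*L^2" using s2 by (intro mult_mono) auto
  have t1: "8*D \<le> 8*D*(1+L^5)" using grow[of "8*D"] D by simp
  have t2: "16*L*Y \<le> 16*Y*c*D*(1+L^5)"
  proof -
    have "16*L*Y = (16*Y)*L" by simp
    also have "\<dots> \<le> (16*Y)*(c*D)" using LD Y by (intro mult_left_mono) auto
    also have "\<dots> \<le> (16*Y)*(c*D)*(1+L^5)" using grow[of "(16*Y)*(c*D)"] cD Y by simp
    finally show ?thesis by (simp add: mult.assoc)
  qed
  have t3: "252 * L^2 \<le> 252*c*D*(1+L^5)"
  proof -
    have "L^2 = L * L" by (simp add: power2_eq_square)
    also have "\<dots> \<le> (c*D) * L" using LD L0 by (intro mult_right_mono) auto
    also have "\<dots> \<le> (c*D) * (1 + L^5)" using pow_le_aux(1)[OF L0] cD by (intro mult_left_mono) auto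
    finally show ?thesis by simp
  qed
  have t4: "28 * (L^2*L^2) \<le> 28*c*D*(1+L^5)"
  proof -
    have "L^2*L^2 = L * L^3" by (simp add: power2_eq_square power3_eq_cube)
    also have "\<dots> \<le> (c*D) * L^3" using LD L0 by (intro mult_right_mono) auto
    also have "\<dots> \<le> (c*D) * (1 + L^5)" using pow_le_aux(2)[OF L0] cD by (intro mult_left_mono) auto
    finally show ?thesis by simp
  qed
  have t5: "8*a/Y \<le> 8*c*D*(1+L^5)"
  proof -
    have "a/Y \<le> L" using aL Y by (simp add: divide_le_eq)
    also have "\<dots> \<le> c*D" by (rule LD)
    also have "\<dots> \<le> (c*D)*(1+L^5)" using grow[OF cD] .
    finally show ?thesis by simp
  qed
  have "28 * s^2*(1 + s^2) = 28 * s^2 + 28*(s^2 * s^2)" by (simp add: algebra_simps)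
  then have "8*D + 16*L*Y + 224 * s^2 + 28 * s^2*(1 + s^2) + 8*a/Y
      \<le> 8*D + 16*L*Y + 252 * L^2 + 28 * (L^2*L^2) + 8*a/Y" using s2 s4 by simp
  also have "\<dots> \<le> 8*D*(1+L^5) + 16*Y*c*D*(1+L^5) + 252*c*D*(1+L^5) + 28*c*D*(1+L^5) + 8*c*D*(1+L^5)"
    using t1 t2 t3 t4 t5 by linarith
  also have "\<dots> = (8 + 16*Y*c + 288*c) * D * (1 + L^5)" by (simp add: algebra_simps)
  finally show ?thesis .
qed

lemma final_arith2:
  fixes D L c C0 :: real
  assumes D: "0 \<le> D" and L0: "0 \<le> L" and LD: "L \<le> c * D" and c: "0 \<le> c" and C0: "0 \<le> C0"
  shows "1 + C0 * D * (1 + L^5) \<le> (1 + C0 + C0 * c^5) * (1 + D^6)"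
proof -
  have L5: "L^5 \<le> (c*D)^5" using LD L0 by (intro power_mono) auto
  have DL5: "D * L^5 \<le> c^5 * D^6"
  proof -
    have "D * L^5 \<le> D * (c*D)^5" using L5 D by (intro mult_left_mono) auto
    also have "\<dots> = c^5 * D^6" by (simp add: power_mult_distrib eval_nat_numeral)
    finally show ?thesis .
  qed
  have D6: "D \<le> 1 + D^6"
  proof (cases "D \<le> 1")
    case True then show ?thesis using D by (simp add: add_increasing2)
  next
    case False
    then have "D^1 \<le> D^6" by (intro power_increasing) auto
    then show ?thesis by simp
  qed
  have "1 + C0 * D * (1 + L^5) = 1 + C0 * D + C0 * (D * L^5)" by (simp add: algebra_simps)
  also have "\<dots> \<le> 1 + C0 * (1 + D^6) + C0 * (c^5 * D^6)"
    using D6 DL5 C0 by (intro add_mono mult_left_mono) auto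
  also have "\<dots> \<le> 1 + C0 * (1 + D^6) + C0 * (c^5 * (1 + D^6))"
    using C0 c by (intro add_mono mult_left_mono) auto
  also have "\<dots> \<le> (1 + C0 + C0 * c^5) * (1 + D^6)"
    by (simp add: algebra_simps)
  finally show ?thesis .
qed



lemma u2_zero:
  assumes "f x = 0" shows "u2 f x = 0"
proof -
  have ln0: "ln (0::real) = 0" by (simp add: ln_real_def)
  have z: "ln ((y\<^sup>2 + (f (x + y) - f x)\<^sup>2) / (y\<^sup>2 + (f (x + y) + f x)\<^sup>2)) = 0" for y
    using assms by (cases "y\<^sup>2 + (f (x + y))\<^sup>2 = 0") (simp_all add: ln0)
  show ?thesis unfolding u2_def z by simp
qed

theorem mainTheorem7:
  fixes K :: "real set"
  assumes "compact K"
  shows "\<exists>C::real. \<forall>f f' :: real \<Rightarrow> real.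
           continuous_on UNIV f \<and> (\<forall>x. f x \<ge> 0) \<and> (\<forall>x. x \<notin> K \<longrightarrow> f x = 0)
           \<and> (\<forall>x. (f has_real_derivative f' x) (at x)) \<and> f' \<in> Cstar K
           \<longrightarrow> (\<exists>U R :: real \<Rightarrow> real.
                 bounded (range U) \<and> bounded (range R)
                 \<and> (\<forall>x. u2 f x = f x * U x \<and> u2 f x = - f x * (1 + R x))
                 \<and> sup_norm U \<le> C * (1 + dini_norm f' ^ 6)
                 \<and> sup_norm R \<le> C * dini_norm f' * (1 + sup_norm f' ^ 5))"
proof -
  obtain B where B: "\<And>z. z \<in> K \<Longrightarrow> \<bar>z\<bar> \<le> B"
    using compact_imp_bounded[OF assms] unfolding bounded_iff by auto
  define k where "k = max B 1"
  have k1: "1 \<le> k" unfolding k_def by simp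
  have kK: "\<And>z. z \<in> K \<Longrightarrow> \<bar>z\<bar> \<le> k" using B unfolding k_def by force
  define Y where "Y = 2*k + 1"
  define c where "c = Y + 1"
  define C0 where "C0 = 8 + 16*Y*c + 288*c"
  define C where "C = 1 + C0 + C0 * c^5"
  have Y1: "1 \<le> Y" and Y0: "0 < Y" unfolding Y_def using k1 by simp_all
  have c0: "0 \<le> c" unfolding c_def using Y0 by simp
  have C00: "0 \<le> C0" unfolding C0_def using Y0 c0 by simp
  have C0C: "C0 \<le> C" unfolding C_def using C00 c0 by simp
  have outK: "k + 1 \<notin> K" using kK[of "k+1"] k1 by force
  show ?thesis
  proof (rule exI[of _ C], intro allI impI)
    fix f f' :: "real \<Rightarrow> real"
    assume H: "continuous_on UNIV f \<and> (\<forall>x. f x \<ge> 0) \<and> (\<forall>x. x \<notin> K \<longrightarrow> f x = 0)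
           \<and> (\<forall>x. (f has_real_derivative f' x) (at x)) \<and> f' \<in> Cstar K"
    have fcont: "continuous_on UNIV f" and fnn: "\<And>x. f x \<ge> 0" and fK: "\<And>x. x \<notin> K \<Longrightarrow> f x = 0"
      and fder: "\<And>x. (f has_real_derivative f' x) (at x)" and Cs: "f' \<in> Cstar K" using H by auto
    have f'b: "bounded (range f')" and f'K: "\<And>x. x \<notin> K \<Longrightarrow> f' x = 0"
      and dini: "set_integrable lborel {0<..1} (\<lambda>r. modulus_cont f' r / r)"
      using Cs unfolding Cstar_def by auto
    define L where "L = sup_norm f'"
    define D where "D = dini_norm f'"
    have bdd: "bdd_above (range (\<lambda>z. \<bar>f' z\<bar>))"
    proof -
      obtain M where "\<forall>y\<in>range f'. norm y \<le> M" using f'b unfolding bounded_iff by blast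
      then show ?thesis by (intro bdd_aboveI[where M=M]) auto
    qed
    have Lz: "\<bar>f' z\<bar> \<le> L" for z unfolding L_def sup_norm_def by (rule cSUP_upper[OF _ bdd]) simp
    have L0: "0 \<le> L" using Lz[of 0] by simp
    have near: "\<exists>z'. \<bar>z - z'\<bar> \<le> Y \<and> f' z' = 0" for z
    proof (cases "z \<in> K")
      case True
      then have "\<bar>z - (k+1)\<bar> \<le> Y" using kK[OF True] unfolding Y_def by linarith
      then show ?thesis using f'K[OF outK] by blast
    next
      case False then show ?thesis using f'K[OF False] Y0 by (intro exI[of _ z]) simp
    qed
    have zD: "\<bar>f' z\<bar> \<le> c * D" for z
      unfolding c_def D_def dini_norm_def
      by (rule L_le_D[OF Lz _ near dini]) (use Y0 in simp)
    have LD: "L \<le> c * D" unfolding L_def sup_norm_def by (rule cSUP_least) (use zD in auto)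
    have D0: "0 \<le> D"
    proof -
      have "0 \<le> c * D" using zD[of 0] by simp
      moreover have "0 < c" unfolding c_def using Y0 by simp
      ultimately show ?thesis by (simp add: zero_le_mult_iff)
    qed
    have fM: "\<bar>f z\<bar> \<le> L * Y" for z
    proof (cases "z \<in> K")
      case True
      have "\<bar>f z - f (k+1)\<bar> \<le> L * \<bar>z - (k+1)\<bar>" by (rule lipschitz_from_deriv[OF fder Lz])
      moreover have "\<bar>z - (k+1)\<bar> \<le> Y" using kK[OF True] unfolding Y_def by linarith
      ultimately have "\<bar>f z - f (k+1)\<bar> \<le> L * Y" using L0 by (meson mult_left_mono order.trans)
      then show ?thesis using fK[OF outK] by simp
    next
      case False then show ?thesis using fK[OF False] L0 Y0 by simp
    qed
    define U where "U = (\<lambda>x. if f x = 0 then 0 else u2 f x / f x)"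
    define R where "R = (\<lambda>x. if f x = 0 then 0 else - (u2 f x + f x) / f x)"
    have Rb: "\<bar>R x\<bar> \<le> C0 * D * (1 + L^5)" for x
    proof (cases "f x = 0")
      case True then show ?thesis unfolding R_def using C00 D0 L0 by simp
    next
      case False
      then have apos: "0 < f x" using fnn[of x] by simp
      have xK: "\<bar>x\<bar> \<le> k" using fK[of x] False kK by blast
      have supp: "f z = 0" if "Y < \<bar>z - x\<bar>" for z
      proof -
        have "\<bar>z\<bar> > k" using that xK unfolding Y_def by linarith
        then have "z \<notin> K" using kK by force
        then show ?thesis by (rule fK)
      qed
      have est: "4 * pi * \<bar>u2 f x + f x\<bar> \<le> 8 * f x * D
          + 16 * f x * L * Y + 224 * f x * (f' x)^2 + 28 * f x * (f' x)^2 * (1 + (f' x)^2)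
          + 8 * (f x)^2 / Y"
        unfolding D_def dini_norm_def
        by (rule main_estimate[OF fcont fder Lz fM apos Y1 supp dini])
      define T where "T = 8*D + 16*L*Y + 224 * (f' x)^2 + 28 * (f' x)^2*(1 + (f' x)^2) + 8*f x/Y"
      have "4 * pi * \<bar>u2 f x + f x\<bar> \<le> f x * T"
        using est unfolding T_def by (simp add: algebra_simps power2_eq_square)
      have T0: "0 \<le> T" unfolding T_def using D0 L0 Y0 apos by simp
      have "\<bar>u2 f x + f x\<bar> \<le> f x * T"
      proof -
        have "1 * \<bar>u2 f x + f x\<bar> \<le> (4 * pi) * \<bar>u2 f x + f x\<bar>"
          by (rule mult_right_mono) (use pi_gt3 in auto)
        then show ?thesis using \<open>4 * pi * \<bar>u2 f x + f x\<bar> \<le> f x * T\<close> by simp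
      qed
      then have "\<bar>R x\<bar> \<le> T" unfolding R_def using False apos
        by (simp add: abs_divide divide_le_eq mult.commute)
      also have "T \<le> C0 * D * (1 + L^5)" unfolding T_def C0_def
        by (rule final_arith[OF D0 L0 LD c0 Lz[of x] _ _ Y0]) (use apos fM[of x] in auto)
      finally show ?thesis .
    qed
    have UR: "U x = - R x - 1" if "f x \<noteq> 0" for x
      unfolding U_def R_def using that by (simp add: field_simps)
    have Ub: "\<bar>U x\<bar> \<le> C * (1 + D^6)" for x
    proof -
      have "\<bar>U x\<bar> \<le> 1 + \<bar>R x\<bar>"
        by (cases "f x = 0") (auto simp: UR, simp add: U_def)
      also have "\<dots> \<le> 1 + C0 * D * (1 + L^5)" using Rb[of x] by simp
      also have "\<dots> \<le> (1 + C0 + C0 * c^5) * (1 + D^6)"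
        by (rule final_arith2[OF D0 L0 LD c0 C00])
      finally show ?thesis unfolding C_def .
    qed
    show "\<exists>U R :: real \<Rightarrow> real.
                 bounded (range U) \<and> bounded (range R)
                 \<and> (\<forall>x. u2 f x = f x * U x \<and> u2 f x = - f x * (1 + R x))
                 \<and> sup_norm U \<le> C * (1 + dini_norm f' ^ 6)
                 \<and> sup_norm R \<le> C * dini_norm f' * (1 + sup_norm f' ^ 5)"
    proof (intro exI conjI allI)
      show "bounded (range U)" unfolding bounded_iff using Ub by auto
      show "bounded (range R)" unfolding bounded_iff using Rb by auto
      fix x
      show "u2 f x = f x * U x" unfolding U_def by (auto simp: u2_zero)
      show "u2 f x = - f x * (1 + R x)" unfolding R_def by (auto simp: u2_zero field_simps)
    next
      show "sup_norm U \<le> C * (1 + dini_norm f' ^ 6)"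
        unfolding sup_norm_def D_def[symmetric] by (rule cSUP_least) (use Ub in auto)
      have "C0 * D * (1 + L^5) \<le> C * D * (1 + L^5)"
        using C0C D0 L0 by (intro mult_right_mono) auto
      then show "sup_norm R \<le> C * dini_norm f' * (1 + sup_norm f' ^ 5)"
        unfolding sup_norm_def[of R] D_def[symmetric] L_def[symmetric]
        by (intro cSUP_least) (use Rb in \<open>auto intro: order.trans\<close>)
    qed
  qed
qed

end
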